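(* Let $m$ be a probability measure on $\Sigma\times\Sigma\times\mathbb{P}(\mathbb{R}^m)$ which is stationary for the kernel $\bar K$. Then there exists a unique $\eta\in\mathrm{Prob}(\Sigma\times\mathbb{P}(\mathbb{R}^m))$ such that $m=K\ltimes\eta$, that is, for every $\psi\in C(\Sigma\times\Sigma\times\mathbb{P}(\mathbb{R}^m))$, $$\int \psi(\omega_1,\omega_0,\hat v)\,dm(\omega_1,\omega_0,\hat v)=\int\!\!\int \psi(\omega_1,\omega_0,\hat v)\,dK_{\omega_0}(\omega_1)\,d\eta(\omega_0,\hat v).$$ Moreover, $\eta$ is stationary for the kernel $K_A$.
   Context: $\Sigma$ is a compact metric space, $K\colon\Sigma\to\mathrm{Prob}(\Sigma)$ is a continuous (weak* ) uniformly ergodic Markov kernel, i.e. there are $\mu\in\mathrm{Prob}(\Sigma)$, $C<\infty$, $\sigma\in(0,1)$ with $\|K^n_x-\mu\|_{TV}\le C\sigma^n$ for all $x,n$. $A\colon\Sigma\times\Sigma\to\mathrm{GL}_m(\mathbb{R})$ is a measurable fiber map. $\mathbb{P}(\mathbb{R}^m)$ is real projective space; $\hat v$ is the projective point of $v\ne0$ and $\hat A(y,x)\hat v$ is the projective point of $A(y,x)v$. The kernel $\bar K$ on $\Sigma\times\Sigma\times\mathbb{P}(\mathbb{R}^m)$ is $\bar K(\omega_1,\omega_0,\hat v)=K_{\omega_1}\times\delta_{(\omega_1,\hat A(\omega_1,\omega_0)\hat v)}$, i.e. the law of $(\omega_2,\omega_1,\hat A(\omega_1,\omega_0)\hat v)$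 with $\omega_2\sim K_{\omega_1}$. The kernel $K_A$ on $\Sigma\times\mathbb{P}(\mathbb{R}^m)$ assigns to $(\omega_0,\hat v)$ the law of $(\omega_1,\hat A(\omega_1,\omega_0)\hat v)$ with $\omega_1\sim K_{\omega_0}$. A probability $\nu$ is stationary for a kernel $P$ if $\nu(E)=\int P(z)(E)\,d\nu(z)$ for all Borel $E$. *)

theory Defs
  imports "HOL-Probability.Probability"
begin

text \<open>A nonzero vector v is sent to the orthogonal projection onto its line,
  v v^T / (v . v).  This map identifies P(R^m) (with its quotient topology)
  homeomorphically with the compact set PRm of matrices below.\<close>

definition proj_pt :: "real^'m \<Rightarrow> real^'m^'m" where
  "proj_pt v = (\<chi> i j. (v $ i * v $ j) / (v \<bullet> v))"

definition PRm :: "(real^'m^'m) set" where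
  "PRm = proj_pt ` {v. v \<noteq> 0}"

definition proj_act :: "real^'m^'m \<Rightarrow> real^'m^'m \<Rightarrow> real^'m^'m" where
  "proj_act M P = proj_pt (M *v (SOME v. v \<noteq> 0 \<and> proj_pt v = P))"

definition markov_kernel :: "('a::topological_space \<Rightarrow> 'a measure) \<Rightarrow> bool" where
  "markov_kernel K \<longleftrightarrow> K \<in> borel \<rightarrow>\<^sub>M prob_algebra borel"

definition weak_star_continuous :: "('a::topological_space \<Rightarrow> 'a measure) \<Rightarrow> bool" where
  "weak_star_continuous K \<longleftrightarrow>
     (\<forall>f::'a \<Rightarrow> real. continuous_on UNIV f \<longrightarrow> continuous_on UNIV (\<lambda>x. \<integral>y. f y \<partial>K x))"

fun kpow :: "('a::topological_space \<Rightarrow> 'a measure) \<Rightarrow> nat \<Rightarrow> 'a \<Rightarrow> 'a measure" where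
  "kpow K 0 x = return borel x"
| "kpow K (Suc n) x = kpow K n x \<bind> K"

text \<open>Total variation distance (sup over Borel sets; the factor-2 convention is absorbed in C).\<close>
definition tv_dist :: "'a::topological_space measure \<Rightarrow> 'a measure \<Rightarrow> real" where
  "tv_dist M N = (SUP E \<in> sets (borel :: 'a measure). \<bar>measure M E - measure N E\<bar>)"

definition uniformly_ergodic :: "('a::topological_space \<Rightarrow> 'a measure) \<Rightarrow> bool" where
  "uniformly_ergodic K \<longleftrightarrow>
     (\<exists>\<mu> (C::real) (\<sigma>::real). \<mu> \<in> space (prob_algebra borel) \<and> 0 < \<sigma> \<and> \<sigma> < 1 \<and>
        (\<forall>x n. tv_dist (kpow K n x) \<mu> \<le> C * \<sigma> ^ n))"

definition stationary :: "('b \<Rightarrow> 'b measure) \<Rightarrow> 'b measure \<Rightarrow> bool" where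
  "stationary P \<nu> \<longleftrightarrow> (\<forall>E \<in> sets \<nu>. emeasure \<nu> E = (\<integral>\<^sup>+ z. emeasure (P z) E \<partial>\<nu>))"

definition Kbar ::
  "('a::topological_space \<Rightarrow> 'a measure) \<Rightarrow> ('a \<Rightarrow> 'a \<Rightarrow> real^'m^'m)
    \<Rightarrow> 'a \<times> 'a \<times> (real^'m^'m) \<Rightarrow> ('a \<times> 'a \<times> (real^'m^'m)) measure" where
  "Kbar K A = (\<lambda>(w1, w0, P). distr (K w1) borel (\<lambda>w2. (w2, w1, proj_act (A w1 w0) P)))"

definition KA ::
  "('a::topological_space \<Rightarrow> 'a measure) \<Rightarrow> ('a \<Rightarrow> 'a \<Rightarrow> real^'m^'m)
    \<Rightarrow> 'a \<times> (real^'m^'m) \<Rightarrow> ('a \<times> (real^'m^'m)) measure" where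
  "KA K A = (\<lambda>(w0, P). distr (K w0) borel (\<lambda>w1. (w1, proj_act (A w1 w0) P)))"

end

theory Submission
  imports Defs
begin

lemma compact_univ_countable_basis:
  assumes "compact (UNIV::'a::metric_space set)"
  shows "\<exists>B::'a set set. countable B \<and> topological_basis B"
proof -
  have "\<forall>n::nat. \<exists>k. finite k \<and> (UNIV::'a set) \<subseteq> (\<Union>x\<in>k. ball x (1/Suc n))"
    using assms unfolding compact_eq_totally_bounded by simp
  then obtain k where k: "\<And>n. finite (k n)" "\<And>n. (UNIV::'a set) \<subseteq> (\<Union>x\<in>k n. ball x (1/Suc n))"
    by metis
  define B where "B = (\<Union>n. (\<lambda>x. ball x (1/Suc n)) ` k n)"
  have "countable B" unfolding B_def
    by (rule countable_UN[of UNIV], simp) (intro countable_image countable_finite k(1))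
  moreover have "topological_basis B"
  proof (rule topological_basisI)
    show "open B'" if "B' \<in> B" for B' using that by (auto simp: B_def)
  next
    fix O' and x :: 'a assume "open O'" "x \<in> O'"
    then obtain e where e: "e > 0" "ball x e \<subseteq> O'" using open_contains_ball by blast
    obtain n where n: "inverse (real (Suc n)) < e/2" using reals_Archimedean[of "e/2"] e by auto
    then have n': "1 / real (Suc n) < e/2" by (simp add: field_simps)
    from k(2)[of n] obtain y where y: "y \<in> k n" "x \<in> ball y (1/Suc n)" by blast
    have "ball y (1/Suc n) \<subseteq> ball x e"
    proof
      fix z assume "z \<in> ball y (1/Suc n)"
      then have "dist y z < 1/Suc n" by simp
      moreover have "dist x y < 1/Suc n" using y(2) by (simp add: dist_commute)
      ultimately have "dist x z < e" using dist_triangle[of x z y] n' by linarith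
      then show "z \<in> ball x e" by simp
    qed
    then show "\<exists>B'\<in>B. x \<in> B' \<and> B' \<subseteq> O'"
      using y e unfolding B_def by blast
  qed
  ultimately show ?thesis by blast
qed

lemma borel_prod_sets:
  fixes Ba :: "'a::topological_space set set" and Bb :: "'b::topological_space set set"
  assumes "countable Ba" "topological_basis Ba" "countable Bb" "topological_basis Bb"
  shows "sets (borel :: ('a \<times> 'b) measure) = sets (borel \<Otimes>\<^sub>M borel)"
proof
  let ?P = "(\<lambda>(a, b). a \<times> b) ` (Ba \<times> Bb)"
  have P: "countable ?P" "topological_basis ?P" using assms by (auto intro: topological_basis_prod)
  have eq: "(borel :: ('a \<times> 'b) measure) = sigma UNIV ?P" by (rule borel_eq_countable_basis[OF P])
  have Psub: "?P \<subseteq> sets ((borel::'a measure) \<Otimes>\<^sub>M (borel::'b measure))"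
    using assms(2,4) by (auto intro!: pair_measureI borel_open dest: topological_basis_open)
  have "sigma_sets UNIV ?P \<subseteq> sets ((borel::'a measure) \<Otimes>\<^sub>M (borel::'b measure))"
  proof (intro sets.sigma_sets_subset')
    show "UNIV \<in> sets ((borel::'a measure) \<Otimes>\<^sub>M (borel::'b measure))"
      using sets.top[of "(borel::'a measure) \<Otimes>\<^sub>M (borel::'b measure)"] by (simp add: space_pair_measure)
  qed (rule Psub)
  then show "sets (borel :: ('a \<times> 'b) measure) \<subseteq> sets (borel \<Otimes>\<^sub>M borel)"
    by (subst eq) simp
next
  have "id \<in> measurable (borel :: ('a \<times> 'b) measure) (borel \<Otimes>\<^sub>M borel)"
    unfolding measurable_pair_iff
    by (auto intro!: borel_measurable_continuous_onI continuous_intros simp: comp_def)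
  then show "sets (borel \<Otimes>\<^sub>M borel) \<subseteq> sets (borel :: ('a \<times> 'b) measure)"
    using measurable_sets[of id borel "borel \<Otimes>\<^sub>M borel"] by (fastforce simp: space_pair_measure)
qed

lemma countable_basis_prod:
  assumes "\<exists>B::'a::topological_space set set. countable B \<and> topological_basis B"
    and "\<exists>B::'b::topological_space set set. countable B \<and> topological_basis B"
  shows "\<exists>B::('a\<times>'b) set set. countable B \<and> topological_basis B"
proof -
  obtain Ba :: "'a set set" where a: "countable Ba" "topological_basis Ba" using assms(1) by blast
  obtain Bb :: "'b set set" where b: "countable Bb" "topological_basis Bb" using assms(2) by blast
  show ?thesis
    by (rule exI[of _ "(\<lambda>(a, b). a \<times> b) ` (Ba \<times> Bb)"]) (use a b in \<open>auto intro: topological_basis_prod\<close>)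
qed

lemma borel_measurable_vecI:
  fixes f :: "'x \<Rightarrow> 'b::euclidean_space ^ 'n"
  assumes "\<And>i. (\<lambda>x. f x $ i) \<in> borel_measurable M"
  shows "f \<in> borel_measurable M"
proof -
  have eq: "f = (\<lambda>x. \<Sum>i\<in>UNIV. axis i (f x $ i))"
    by (auto simp: vec_eq_iff sum_component axis_def if_distrib cong: if_cong)
  have c: "continuous_on UNIV (axis i :: 'b \<Rightarrow> 'b^'n)" for i
    unfolding axis_def
    apply (rule continuous_on_vec_lambda)
    subgoal for j by (cases "j = i") (auto intro: continuous_intros)
    done
  show ?thesis
    by (subst eq, intro borel_measurable_sum borel_measurable_continuous_on[OF c] assms)
qed

lemma borel_measurable_vec_nth_comp[measurable (raw)]:
  fixes f :: "'x \<Rightarrow> ('b::real_normed_vector)^'n"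
  assumes "f \<in> borel_measurable M" shows "(\<lambda>x. f x $ i) \<in> borel_measurable M"
proof -
  have "continuous_on UNIV (\<lambda>x::('b::real_normed_vector)^'n. x $ i)"
    by (intro continuous_intros)
  then show ?thesis using borel_measurable_continuous_on assms by blast
qed

lemma div_div_cancel_aux: "s \<noteq> 0 \<Longrightarrow> (a / s) / (b / s) = (a::real) / b" by simp

definition pa_fun :: "real^'m^'m \<Rightarrow> real^'m^'m \<Rightarrow> real^'m^'m" where
  "pa_fun M P = (\<chi> i j. (\<Sum>k\<in>UNIV. \<Sum>l\<in>UNIV. M$i$k * P$k$l * M$j$l) /
      (\<Sum>r\<in>UNIV. \<Sum>k\<in>UNIV. \<Sum>l\<in>UNIV. M$r$k * P$k$l * M$r$l))"

lemma sum_sum_aux: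
  fixes a b w :: "'m::finite \<Rightarrow> real"
  shows "(\<Sum>k\<in>UNIV. \<Sum>l\<in>UNIV. a k * (w k * w l / s) * b l) = (\<Sum>k\<in>UNIV. a k * w k) * (\<Sum>l\<in>UNIV. b l * w l) / s"
  by (simp add: sum_product sum_divide_distrib mult_ac)

lemma pa_fun_proj_pt:
  fixes v :: "real^'m"
  assumes "v \<noteq> 0"
  shows "pa_fun M (proj_pt v) = proj_pt (M *v v)"
proof -
  define s where "s = v \<bullet> v"
  have s: "s \<noteq> 0" using assms by (simp add: s_def)
  define u where "u = M *v v"
  have u: "u $ i = (\<Sum>k\<in>UNIV. M$i$k * v$k)" for i by (simp add: u_def matrix_vector_mult_def)
  have num: "(\<Sum>k\<in>UNIV. \<Sum>l\<in>UNIV. M$i$k * proj_pt v$k$l * M$j$l) = u$i * u$j / s" for i j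
    using sum_sum_aux[of "\<lambda>k. M$i$k" "\<lambda>k. v$k" s "\<lambda>l. M$j$l"]
    by (simp add: proj_pt_def s_def u algebra_simps)
  have uu: "u \<bullet> u = (\<Sum>r\<in>UNIV. u$r * u$r)" by (simp add: inner_vec_def)
  have den: "(\<Sum>r\<in>UNIV. \<Sum>k\<in>UNIV. \<Sum>l\<in>UNIV. M$r$k * proj_pt v$k$l * M$r$l) = (u \<bullet> u) / s"
    unfolding uu by (simp only: num sum_divide_distrib)
  have den': "(\<Sum>r\<in>UNIV. u$r * u$r / s) = (u \<bullet> u) / s"
    unfolding uu by (simp only: sum_divide_distrib)
  show ?thesis
    unfolding pa_fun_def num den
    using s by (simp add: proj_pt_def u_def[symmetric] vec_eq_iff div_div_cancel_aux den' del: divide_divide_eq_left)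
qed

lemma proj_act_in:
  assumes "P \<in> PRm" shows "proj_act M P = pa_fun M P"
proof -
  have ex: "\<exists>v. v \<noteq> 0 \<and> proj_pt v = P" using assms by (auto simp: PRm_def)
  define w where "w = (SOME v. v \<noteq> 0 \<and> proj_pt v = P)"
  have w: "w \<noteq> 0" "proj_pt w = P" using someI_ex[OF ex] by (auto simp: w_def)
  show ?thesis unfolding proj_act_def w_def[symmetric] using pa_fun_proj_pt[OF w(1), of M] w(2) by simp
qed

lemma proj_act_out:
  assumes "P \<notin> PRm" shows "proj_act M P = proj_pt (M *v (SOME v. False))"
proof -
  have "(\<lambda>v. v \<noteq> 0 \<and> proj_pt v = P) = (\<lambda>v. False)" using assms by (auto simp: PRm_def)
  then show ?thesis by (simp add: proj_act_def)
qed

lemma proj_pt_scale: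
  fixes v :: "real^'m"
  assumes "c \<noteq> 0" shows "proj_pt (c *\<^sub>R v) = proj_pt v"
  using assms by (simp add: proj_pt_def vec_eq_iff inner_scaleR_left inner_scaleR_right power2_eq_square)

lemma PRm_sphere: "(PRm :: (real^'m^'m) set) = proj_pt ` sphere 0 1"
proof
  show "proj_pt ` sphere 0 1 \<subseteq> (PRm :: (real^'m^'m) set)" unfolding PRm_def by auto
next
  show "(PRm :: (real^'m^'m) set) \<subseteq> proj_pt ` sphere 0 1"
  proof
    fix P :: "real^'m^'m" assume "P \<in> PRm"
    then obtain v :: "real^'m" where v: "v \<noteq> 0" "P = proj_pt v" by (auto simp: PRm_def)
    have "proj_pt ((1 / norm v) *\<^sub>R v) = P" using v by (subst proj_pt_scale) auto
    moreover have "(1 / norm v) *\<^sub>R v \<in> sphere 0 1" using v by (simp add: norm_scaleR)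
    ultimately show "P \<in> proj_pt ` sphere 0 1" by blast
  qed
qed

lemma compact_PRm: "compact (PRm :: (real^'m^'m) set)"
proof -
  have "continuous_on (sphere 0 1) (proj_pt :: real^'m \<Rightarrow> real^'m^'m)"
    unfolding proj_pt_def
    apply (intro continuous_on_vec_lambda continuous_intros)
    apply (auto simp flip: power2_norm_eq_inner)
    done
  then show ?thesis unfolding PRm_sphere by (intro compact_continuous_image compact_sphere)
qed

lemma closed_PRm: "closed (PRm :: (real^'m^'m) set)"
  using compact_PRm compact_imp_closed by blast

lemma proj_act_PRm:
  fixes M :: "real^'m^'m"
  assumes "invertible M" "P \<in> PRm" shows "proj_act M P \<in> PRm"
proof -
  have ex: "\<exists>v. v \<noteq> 0 \<and> proj_pt v = P" using assms by (auto simp: PRm_def)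
  define w where "w = (SOME v. v \<noteq> 0 \<and> proj_pt v = P)"
  have w: "w \<noteq> 0" "proj_pt w = P" using someI_ex[OF ex] by (auto simp: w_def)
  obtain M' where M': "M' ** M = mat 1" using assms(1) by (auto simp: invertible_def)
  have "M' *v (M *v w) = w" by (simp add: matrix_vector_mul_assoc M')
  then have "M *v w \<noteq> 0" using w(1) by auto
  then show ?thesis unfolding proj_act_def w_def[symmetric] PRm_def by auto
qed

lemma borel_measurable_proj_pt_comp:
  fixes g :: "'x \<Rightarrow> real^'m"
  assumes [measurable]: "g \<in> borel_measurable N"
  shows "(\<lambda>x. proj_pt (g x)) \<in> borel_measurable N"
  unfolding proj_pt_def inner_vec_def
  by (intro borel_measurable_vecI) (simp, measurable)

lemma proj_act_measurable:
  "(\<lambda>p. proj_act (fst p) (snd p)) \<in> borel_measurable (borel :: ((real^'m^'m) \<times> (real^'m^'m)) measure)"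
proof -
  have eq: "(\<lambda>p. proj_act (fst p) (snd p)) =
     (\<lambda>p::(real^'m^'m) \<times> (real^'m^'m). if p \<in> UNIV \<times> PRm then pa_fun (fst p) (snd p) else proj_pt (fst p *v (SOME v. False)))"
    by (auto simp: proj_act_in proj_act_out fun_eq_iff)
  have m1: "(\<lambda>p::(real^'m^'m) \<times> (real^'m^'m). pa_fun (fst p) (snd p)) \<in> borel_measurable borel"
    unfolding pa_fun_def borel_prod[symmetric]
    by (intro borel_measurable_vecI) (simp, measurable)
  have m2: "(\<lambda>p::(real^'m^'m) \<times> (real^'m^'m). proj_pt (fst p *v (SOME v. False))) \<in> borel_measurable borel"
    unfolding borel_prod[symmetric]
    by (intro borel_measurable_proj_pt_comp borel_measurable_vecI) (simp add: matrix_vector_mult_def, measurable)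
  have s: "(UNIV \<times> PRm) \<inter> space borel \<in> sets (borel :: ((real^'m^'m) \<times> (real^'m^'m)) measure)"
    by (simp add: borel_closed closed_Times closed_PRm)
  show ?thesis unfolding eq by (rule measurable_If_set[OF m1 m2 s])
qed

lemma integral_bind_nonneg:
  fixes f :: "'b \<Rightarrow> real"
  assumes N: "N \<in> measurable M (subprob_algebra B)" and f: "f \<in> borel_measurable B"
    and nn: "\<And>x. 0 \<le> f x" and bnd: "\<And>x. f x \<le> c" and ne: "space M \<noteq> {}"
  shows "(\<integral>x. f x \<partial>(M \<bind> N)) = (\<integral>x. (\<integral>y. f y \<partial>N x) \<partial>M)"
proof -
  have sets: "sets (M \<bind> N) = sets B"
    by (rule sets_bind[OF _ ne]) (use measurable_space[OF N] in \<open>auto simp: space_subprob_algebra\<close>)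
  have fb: "f \<in> borel_measurable (M \<bind> N)" using f by (simp add: measurable_cong_sets[OF sets refl])
  have h: "(\<lambda>x. \<integral>y. f y \<partial>N x) \<in> borel_measurable M"
    by (rule measurable_compose[OF N integral_measurable_subprob_algebra[OF f]])
  have inner: "(\<integral>\<^sup>+y. ennreal (f y) \<partial>N x) = ennreal (\<integral>y. f y \<partial>N x)" if "x \<in> space M" for x
  proof -
    have sx: "subprob_space (N x)" "sets (N x) = sets B"
      using measurable_space[OF N that] by (auto simp: space_subprob_algebra)
    interpret subprob_space "N x" by fact
    have fx: "f \<in> borel_measurable (N x)" using f by (simp add: measurable_cong_sets[OF sx(2) refl])
    have "integrable (N x) f"
      by (rule integrable_const_bound[where B=c]) (use nn bnd fx in auto)
    then show ?thesis by (rule nn_integral_eq_integral) (simp add: nn)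
  qed
  have "(\<integral>x. f x \<partial>(M \<bind> N)) = enn2real (\<integral>\<^sup>+x. ennreal (f x) \<partial>(M \<bind> N))"
    by (rule integral_eq_nn_integral) (use fb nn in auto)
  also have "\<dots> = enn2real (\<integral>\<^sup>+x. \<integral>\<^sup>+y. ennreal (f y) \<partial>N x \<partial>M)"
    by (subst nn_integral_bind[OF _ N]) (use f in auto)
  also have "\<dots> = enn2real (\<integral>\<^sup>+x. ennreal (\<integral>y. f y \<partial>N x) \<partial>M)"
    by (simp add: inner cong: nn_integral_cong)
  also have "\<dots> = (\<integral>x. (\<integral>y. f y \<partial>N x) \<partial>M)"
    by (rule integral_eq_nn_integral[symmetric]) (use h nn in \<open>auto intro: integral_nonneg\<close>)
  finally show ?thesis .
qed

lemma subprob_integral_le_bound: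
  fixes g :: "'b \<Rightarrow> real"
  assumes "subprob_space P" "g \<in> borel_measurable P" "\<And>x. 0 \<le> g x" "\<And>x. g x \<le> c"
  shows "(\<integral>x. g x \<partial>P) \<le> c"
proof -
  interpret subprob_space P by fact
  have c: "0 \<le> c" using assms(3,4) order_trans by blast
  have "(\<integral>x. g x \<partial>P) \<le> (\<integral>x. c \<partial>P)"
    by (rule integral_mono) (use assms in \<open>auto intro!: integrable_const_bound[where B=c]\<close>)
  also have "\<dots> = measure P (space P) * c" by simp
  also have "\<dots> \<le> c" using c subprob_measure_le_1 by (simp add: mult_left_le_one_le)
  finally show ?thesis .
qed

lemma integral_bind_bounded:
  fixes f :: "'b \<Rightarrow> real"
  assumes N: "N \<in> measurable M (subprob_algebra B)" and f: "f \<in> borel_measurable B"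
    and bnd: "\<And>x. \<bar>f x\<bar> \<le> c" and M: "subprob_space M"
  shows "(\<integral>x. f x \<partial>(M \<bind> N)) = (\<integral>x. (\<integral>y. f y \<partial>N x) \<partial>M)"
proof -
  have ne: "space M \<noteq> {}" using M subprob_space.subprob_not_empty by blast
  define fp where "fp = (\<lambda>x. max (f x) 0)"
  define fm where "fm = (\<lambda>x. max (- f x) 0)"
  have fpm: "f x = fp x - fm x" for x by (simp add: fp_def fm_def)
  have mp: "fp \<in> borel_measurable B" "fm \<in> borel_measurable B" unfolding fp_def fm_def using f by auto
  have bp: "0 \<le> fp x" "fp x \<le> c" "0 \<le> fm x" "fm x \<le> c" for x
    using bnd[of x] by (auto simp: fp_def fm_def)
  have sets: "sets (M \<bind> N) = sets B"
    by (rule sets_bind[OF _ ne]) (use measurable_space[OF N] in \<open>auto simp: space_subprob_algebra\<close>)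
  have sub: "subprob_space (M \<bind> N)" by (rule subprob_space_bind[OF M N])
  have intb: "integrable (M \<bind> N) g" if "g \<in> borel_measurable B" "\<And>x. 0 \<le> g x" "\<And>x. g x \<le> c" for g
  proof -
    interpret subprob_space "M \<bind> N" by (fact sub)
    show ?thesis
      by (rule integrable_const_bound[where B=c]) (use that in \<open>auto simp: measurable_cong_sets[OF sets refl]\<close>)
  qed
  have intN: "integrable (N x) g" if "x \<in> space M" "g \<in> borel_measurable B" "\<And>x. 0 \<le> g x" "\<And>x. g x \<le> c" for g x
  proof -
    have sx: "subprob_space (N x)" "sets (N x) = sets B"
      using measurable_space[OF N that(1)] by (auto simp: space_subprob_algebra)
    interpret subprob_space "N x" by (fact sx(1))
    show ?thesis
      by (rule integrable_const_bound[where B=c]) (use that sx in \<open>auto simp: measurable_cong_sets[OF sx(2) refl]\<close>)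
  qed
  have intM: "integrable M (\<lambda>x. \<integral>y. g y \<partial>N x)" if g: "g \<in> borel_measurable B" "\<And>x. 0 \<le> g x" "\<And>x. g x \<le> c" for g
  proof -
    interpret subprob_space M by (fact M)
    have h: "(\<lambda>x. \<integral>y. g y \<partial>N x) \<in> borel_measurable M"
      by (rule measurable_compose[OF N integral_measurable_subprob_algebra[OF g(1)]])
    have "norm (\<integral>y. g y \<partial>N x) \<le> c" if x: "x \<in> space M" for x
    proof -
      have sx: "subprob_space (N x)" "sets (N x) = sets B"
        using measurable_space[OF N x] by (auto simp: space_subprob_algebra)
      have "0 \<le> (\<integral>y. g y \<partial>N x)" using g(2) by (simp add: Bochner_Integration.integral_nonneg)
      moreover have "(\<integral>y. g y \<partial>N x) \<le> c"
        by (rule subprob_integral_le_bound[OF sx(1)]) (use g sx in \<open>auto simp: measurable_cong_sets[OF sx(2) refl]\<close>)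
      ultimately show ?thesis by simp
    qed
    then show ?thesis by (intro integrable_const_bound[where B=c] h AE_I2) auto
  qed
  have "(\<integral>x. f x \<partial>(M \<bind> N)) = (\<integral>x. fp x - fm x \<partial>(M \<bind> N))" by (simp add: fpm)
  also have "\<dots> = (\<integral>x. fp x \<partial>(M \<bind> N)) - (\<integral>x. fm x \<partial>(M \<bind> N))"
    using Bochner_Integration.integral_diff[of "M \<bind> N" fp fm] intb[OF mp(1) bp(1,2)] intb[OF mp(2) bp(3,4)] by simp
  also have "\<dots> = (\<integral>x. (\<integral>y. fp y \<partial>N x) \<partial>M) - (\<integral>x. (\<integral>y. fm y \<partial>N x) \<partial>M)"
    using integral_bind_nonneg[OF N mp(1) bp(1,2) ne] integral_bind_nonneg[OF N mp(2) bp(3,4) ne] by simp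
  also have "\<dots> = (\<integral>x. (\<integral>y. fp y \<partial>N x) - (\<integral>y. fm y \<partial>N x) \<partial>M)"
    using Bochner_Integration.integral_diff[of M "\<lambda>x. \<integral>y. fp y \<partial>N x" "\<lambda>x. \<integral>y. fm y \<partial>N x"]
      intM[OF mp(1) bp(1,2)] intM[OF mp(2) bp(3,4)] by simp
  also have "\<dots> = (\<integral>x. (\<integral>y. f y \<partial>N x) \<partial>M)"
  proof (rule Bochner_Integration.integral_cong[OF refl])
    fix x assume x: "x \<in> space M"
    have "(\<integral>y. f y \<partial>N x) = (\<integral>y. fp y - fm y \<partial>N x)" by (simp add: fpm)
    also have "\<dots> = (\<integral>y. fp y \<partial>N x) - (\<integral>y. fm y \<partial>N x)"
      using Bochner_Integration.integral_diff[of "N x" fp fm] intN[OF x mp(1) bp(1,2)] intN[OF x mp(2) bp(3,4)] by simp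
    finally show "(\<integral>y. fp y \<partial>N x) - (\<integral>y. fm y \<partial>N x) = (\<integral>y. f y \<partial>N x)" by simp
  qed
  finally show ?thesis .
qed

lemma closed_approx_integral:
  fixes C :: "'x::metric_space set"
  assumes P: "prob_space \<mu>" "sets \<mu> = sets borel" and C: "closed C" "C \<noteq> {}"
  shows "(\<lambda>n. \<integral>x. max 0 (1 - real (Suc n) * infdist x C) \<partial>\<mu>) \<longlonglongrightarrow> measure \<mu> C"
proof -
  interpret prob_space \<mu> by fact
  define fn where "fn = (\<lambda>n x. max 0 (1 - real (Suc n) * infdist x C))"
  have meas: "fn n \<in> borel_measurable \<mu>" for n
    unfolding measurable_cong_sets[OF P(2) refl] fn_def
    by (intro borel_measurable_continuous_onI continuous_intros)
  have lim: "(\<lambda>n. fn n x) \<longlonglongrightarrow> indicator C x" for x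
  proof (cases "x \<in> C")
    case True
    then show ?thesis by (simp add: fn_def)
  next
    case False
    have d: "infdist x C > 0"
      using False in_closed_iff_infdist_zero[OF C] infdist_nonneg[of x C] by auto
    obtain N where N: "1 < real N * infdist x C" using ex_less_of_nat_mult[OF d] by blast
    have "eventually (\<lambda>n. fn n x = 0) sequentially"
      unfolding eventually_sequentially
    proof (intro exI allI impI)
      fix n assume "N \<le> n"
      then have "real N * infdist x C \<le> real (Suc n) * infdist x C"
        using d by (intro mult_right_mono) auto
      then show "fn n x = 0" using N by (simp add: fn_def)
    qed
    then have "(\<lambda>n. fn n x) \<longlonglongrightarrow> 0" by (rule tendsto_eventually)
    then show ?thesis using False by simp
  qed
  have "(\<lambda>n. \<integral>x. fn n x \<partial>\<mu>) \<longlonglongrightarrow> (\<integral>x. indicator C x \<partial>\<mu>)"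
  proof (rule integral_dominated_convergence[where w="\<lambda>_. 1"])
    show "indicator C \<in> borel_measurable \<mu>"
      using C(1) by (simp add: measurable_cong_sets[OF P(2) refl] borel_closed)
    show "\<And>i. AE x in \<mu>. norm (fn i x) \<le> 1" by (auto simp: fn_def infdist_nonneg)
  qed (use meas lim in auto)
  moreover have "(\<integral>x. indicator C x \<partial>\<mu>) = measure \<mu> C"
    using C(1) P(2) by (simp add: borel_closed sets_eq_imp_space_eq[OF P(2)])
  ultimately show ?thesis by (simp add: fn_def)
qed

theorem proposition2p3:
  fixes K :: "'a::metric_space \<Rightarrow> 'a measure"
    and A :: "'a \<Rightarrow> 'a \<Rightarrow> real^'m^'m"
    and m :: "('a \<times> 'a \<times> (real^'m^'m)) measure"
  assumes compact_Sigma: "compact (UNIV :: 'a set)"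
    and kernel: "markov_kernel K"
    and cont: "weak_star_continuous K"
    and erg: "uniformly_ergodic K"
    and A_meas: "(\<lambda>(y, x). A y x) \<in> borel_measurable borel"
    and A_GL: "\<And>y x. invertible (A y x)"
    and m_prob: "m \<in> space (prob_algebra borel)"
    and m_supp: "emeasure m (UNIV \<times> UNIV \<times> PRm) = 1"
    and m_stat: "stationary (Kbar K A) m"
  shows "\<exists>\<eta>. (\<eta> \<in> space (prob_algebra borel) \<and> emeasure \<eta> (UNIV \<times> PRm) = 1 \<and>
              (\<forall>\<psi> :: 'a \<times> 'a \<times> (real^'m^'m) \<Rightarrow> real.
                 continuous_on (UNIV \<times> UNIV \<times> PRm) \<psi> \<longrightarrow>
                 (LINT z : UNIV \<times> UNIV \<times> PRm | m. \<psi> z) =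
                 (LINT q : UNIV \<times> PRm | \<eta>. (\<integral>w1. \<psi> (w1, fst q, snd q) \<partial>K (fst q)))))
           \<and> stationary (KA K A) \<eta>
           \<and> (\<forall>\<eta>'. \<eta>' \<in> space (prob_algebra borel) \<and> emeasure \<eta>' (UNIV \<times> PRm) = 1 \<and>
              (\<forall>\<psi> :: 'a \<times> 'a \<times> (real^'m^'m) \<Rightarrow> real.
                 continuous_on (UNIV \<times> UNIV \<times> PRm) \<psi> \<longrightarrow>
                 (LINT z : UNIV \<times> UNIV \<times> PRm | m. \<psi> z) =
                 (LINT q : UNIV \<times> PRm | \<eta>'. (\<integral>w1. \<psi> (w1, fst q, snd q) \<partial>K (fst q))))
              \<longrightarrow> \<eta>' = \<eta>)"
proof -
  obtain Ba :: "'a set set" where Ba: "countable Ba" "topological_basis Ba"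
    using compact_univ_countable_basis[OF compact_Sigma] by blast
  obtain BM :: "(real^'m^'m) set set" where BM: "countable BM" "topological_basis BM"
    using ex_countable_basis by blast
  define BX where "BX = (\<lambda>(a, b). a \<times> b) ` (Ba \<times> BM)"
  have BX: "countable BX" "topological_basis BX"
    unfolding BX_def using Ba BM by (auto intro: topological_basis_prod)
  have setsZ: "sets (borel :: ('a \<times> 'a \<times> (real^'m^'m)) measure) = sets ((borel::'a measure) \<Otimes>\<^sub>M (borel :: ('a \<times> (real^'m^'m)) measure))"
    by (rule borel_prod_sets[OF Ba BX])
  have setsX: "sets (borel :: ('a \<times> (real^'m^'m)) measure) = sets ((borel::'a measure) \<Otimes>\<^sub>M (borel :: (real^'m^'m) measure))"
    by (rule borel_prod_sets[OF Ba BM])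
  have Kmeas: "K \<in> borel \<rightarrow>\<^sub>M prob_algebra borel" using kernel by (simp add: markov_kernel_def)
  have Kprob: "prob_space (K x)" "sets (K x) = sets borel" for x
    using measurable_space[OF Kmeas, of x] by (auto simp: space_prob_algebra)

  define T where "T = (\<lambda>z::'a \<times> 'a \<times> (real^'m^'m). (fst z, proj_act (A (fst z) (fst (snd z))) (snd (snd z))))"
  have T_meas: "T \<in> borel \<rightarrow>\<^sub>M (borel :: ('a \<times> (real^'m^'m)) measure)"
  proof -
    have c: "(\<lambda>z::'a \<times> 'a \<times> (real^'m^'m). (fst z, fst (snd z))) \<in> borel \<rightarrow>\<^sub>M (borel :: ('a \<times> 'a) measure)"
      by (intro borel_measurable_continuous_onI continuous_intros)
    have Apart: "(\<lambda>z::'a \<times> 'a \<times> (real^'m^'m). A (fst z) (fst (snd z))) \<in> borel_measurable borel"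
      using measurable_compose[OF c A_meas] by simp
    have snd2: "(\<lambda>z::'a \<times> 'a \<times> (real^'m^'m). snd (snd z)) \<in> borel_measurable borel"
      by (intro borel_measurable_continuous_onI continuous_intros)
    have Pp: "(\<lambda>z::'a \<times> 'a \<times> (real^'m^'m). (A (fst z) (fst (snd z)), snd (snd z))) \<in> borel_measurable borel"
      by (intro borel_measurable_Pair Apart snd2)
    have second: "(\<lambda>z::'a \<times> 'a \<times> (real^'m^'m). proj_act (A (fst z) (fst (snd z))) (snd (snd z))) \<in> borel_measurable borel"
      using measurable_compose[OF Pp proj_act_measurable] by simp
    have first: "(\<lambda>z::'a \<times> 'a \<times> (real^'m^'m). fst z) \<in> borel \<rightarrow>\<^sub>M borel"
      by (intro borel_measurable_continuous_onI continuous_intros)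
    have "T \<in> borel \<rightarrow>\<^sub>M ((borel::'a measure) \<Otimes>\<^sub>M (borel :: (real^'m^'m) measure))"
      unfolding T_def by (intro measurable_Pair first second)
    then show ?thesis using measurable_cong_sets[OF refl setsX, of "borel :: ('a \<times> 'a \<times> (real^'m^'m)) measure"] by simp
  qed

  define G where "G = (\<lambda>q::'a \<times> (real^'m^'m). distr (K (fst q)) (borel :: ('a \<times> 'a \<times> (real^'m^'m)) measure) (\<lambda>w. (w, q)))"
  have emb_meas: "(\<lambda>w. (w, q)) \<in> K x \<rightarrow>\<^sub>M (borel :: ('a \<times> 'a \<times> (real^'m^'m)) measure)" for q x
    unfolding measurable_cong_sets[OF Kprob(2) refl]
    by (intro borel_measurable_continuous_onI continuous_intros)
  have G_meas: "G \<in> borel \<rightarrow>\<^sub>M subprob_algebra (borel :: ('a \<times> 'a \<times> (real^'m^'m)) measure)"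
  proof -
    have "(\<lambda>(q, w). (w, q)) \<in> ((borel :: ('a \<times> (real^'m^'m)) measure) \<Otimes>\<^sub>M (borel::'a measure)) \<rightarrow>\<^sub>M
        ((borel::'a measure) \<Otimes>\<^sub>M (borel :: ('a \<times> (real^'m^'m)) measure))"
      by measurable
    then have sw: "(\<lambda>(q, w). (w, q)) \<in> ((borel :: ('a \<times> (real^'m^'m)) measure) \<Otimes>\<^sub>M (borel::'a measure)) \<rightarrow>\<^sub>M
        (borel :: ('a \<times> 'a \<times> (real^'m^'m)) measure)"
      using measurable_cong_sets[OF refl setsZ, of "(borel :: ('a \<times> (real^'m^'m)) measure) \<Otimes>\<^sub>M (borel::'a measure)"] by simp
    have f1: "(\<lambda>q::'a \<times> (real^'m^'m). fst q) \<in> borel \<rightarrow>\<^sub>M borel"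
      by (intro borel_measurable_continuous_onI continuous_intros)
    have g: "(\<lambda>q::'a \<times> (real^'m^'m). K (fst q)) \<in> borel \<rightarrow>\<^sub>M subprob_algebra borel"
      using measurable_compose[OF f1 measurable_prob_algebraD[OF Kmeas]] by simp
    show ?thesis unfolding G_def by (rule measurable_distr2[OF sw g])
  qed
  have Kbar_eq: "Kbar K A = (\<lambda>z. G (T z))"
    by (auto simp: Kbar_def G_def T_def fun_eq_iff split: prod.splits)
  have sets_m: "sets m = sets borel" and prob_m: "prob_space m"
    using m_prob by (auto simp: space_prob_algebra)
  have ne_m: "space m \<noteq> {}" using prob_m prob_space.not_empty by blast
  have T_meas_m: "T \<in> m \<rightarrow>\<^sub>M borel" using T_meas measurable_cong_sets[OF sets_m refl, of "borel :: ('a \<times> (real^'m^'m)) measure"] by simp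
  have Kbar_meas: "Kbar K A \<in> m \<rightarrow>\<^sub>M subprob_algebra borel"
    unfolding Kbar_eq using measurable_compose[OF T_meas_m G_meas] by simp
  have m_bind: "m = m \<bind> Kbar K A"
  proof (rule measure_eqI)
    have "sets (m \<bind> Kbar K A) = sets borel"
      by (rule sets_bind[OF _ ne_m]) (use measurable_space[OF Kbar_meas] in \<open>auto simp: space_subprob_algebra\<close>)
    then show "sets m = sets (m \<bind> Kbar K A)" using sets_m by simp
  next
    fix E assume E: "E \<in> sets m"
    have "emeasure m E = (\<integral>\<^sup>+ z. emeasure (Kbar K A z) E \<partial>m)"
      using m_stat E by (simp add: stationary_def)
    also have "\<dots> = emeasure (m \<bind> Kbar K A) E"
      using emeasure_bind[OF ne_m Kbar_meas, of E] E sets_m by simp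
    finally show "emeasure m E = emeasure (m \<bind> Kbar K A) E" .
  qed
  define \<eta> where "\<eta> = distr m (borel :: ('a \<times> (real^'m^'m)) measure) T"
  have m_eta: "m = \<eta> \<bind> G"
  proof -
    have "m = m \<bind> (\<lambda>z. G (T z))" using m_bind Kbar_eq by simp
    also have "\<dots> = \<eta> \<bind> G" unfolding \<eta>_def by (rule bind_distr[OF T_meas_m G_meas ne_m, symmetric])
    finally show ?thesis .
  qed
  have sets_eta: "sets \<eta> = sets borel" by (simp add: \<eta>_def)
  have prob_eta: "prob_space \<eta>" unfolding \<eta>_def by (rule prob_space.prob_space_distr[OF prob_m T_meas_m])
  have eta_prob: "\<eta> \<in> space (prob_algebra borel)" using sets_eta prob_eta by (simp add: space_prob_algebra)
  have ne_eta: "space \<eta> \<noteq> {}" using prob_eta prob_space.not_empty by blast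
  have G_meas_eta: "G \<in> \<eta> \<rightarrow>\<^sub>M subprob_algebra borel" using G_meas measurable_cong_sets[OF sets_eta refl, of "subprob_algebra (borel :: ('a \<times> 'a \<times> (real^'m^'m)) measure)"] by simp

  define S where "S = (UNIV \<times> UNIV \<times> PRm :: ('a \<times> 'a \<times> (real^'m^'m)) set)"
  define S' where "S' = (UNIV \<times> PRm :: ('a \<times> (real^'m^'m)) set)"
  have S_S': "S = UNIV \<times> S'" by (simp add: S_def S'_def)
  have S'_closed: "closed S'" unfolding S'_def by (intro closed_Times closed_PRm) simp
  have S_closed: "closed S" unfolding S_S' by (intro closed_Times S'_closed) simp
  have S'_compact: "compact S'" unfolding S'_def by (intro compact_Times compact_PRm compact_Sigma)
  have S_compact: "compact S" unfolding S_S' by (intro compact_Times S'_compact compact_Sigma)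

  have eta_S': "emeasure \<eta> S' = 1"
  proof -
    have S'_sets: "S' \<in> sets borel" using S'_closed by (simp add: borel_closed)
    have "emeasure \<eta> S' = emeasure m (T -` S' \<inter> space m)"
      unfolding \<eta>_def by (rule emeasure_distr[OF T_meas_m S'_sets])
    moreover have "S \<subseteq> T -` S' \<inter> space m"
      using sets_eq_imp_space_eq[OF sets_m]
      by (auto simp: S_def S'_def T_def intro!: proj_act_PRm A_GL)
    moreover have "T -` S' \<inter> space m \<in> sets m" using measurable_sets[OF T_meas_m S'_sets] .
    ultimately have "emeasure \<eta> S' \<ge> emeasure m S"
      by (simp add: emeasure_mono)
    then have "emeasure \<eta> S' \<ge> 1" using m_supp by (simp add: S_def)
    moreover have "emeasure \<eta> S' \<le> 1" using prob_space.emeasure_le_1[OF prob_eta] by simp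
    ultimately show ?thesis by simp
  qed

  have KA_eq: "KA K A = (\<lambda>q. distr (G q) borel T)"
  proof
    fix q :: "'a \<times> (real^'m^'m)"
    obtain w0 P where q: "q = (w0, P)" by (cases q)
    have "distr (G q) borel T = distr (K w0) borel (T \<circ> (\<lambda>w. (w, q)))"
      unfolding G_def using q by (simp add: distr_distr[OF T_meas emb_meas])
    also have "T \<circ> (\<lambda>w. (w, q)) = (\<lambda>w1. (w1, proj_act (A w1 w0) P))"
      using q by (simp add: T_def comp_def)
    finally show "KA K A q = distr (G q) borel T" using q by (simp add: KA_def)
  qed
  have KA_meas: "KA K A \<in> \<eta> \<rightarrow>\<^sub>M subprob_algebra borel"
    unfolding KA_eq using measurable_compose[OF G_meas_eta measurable_distr[OF T_meas]] by simp
  have eta_bind: "\<eta> = \<eta> \<bind> KA K A"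
  proof -
    have "\<eta> = distr m borel T" by (simp add: \<eta>_def)
    also have "\<dots> = distr (\<eta> \<bind> G) borel T" using m_eta by (rule arg_cong)
    also have "\<dots> = \<eta> \<bind> (\<lambda>q. distr (G q) borel T)"
      by (rule distr_bind[OF G_meas_eta ne_eta T_meas])
    finally show ?thesis by (simp add: KA_eq)
  qed
  have stat: "stationary (KA K A) \<eta>"
    unfolding stationary_def
  proof
    fix E assume E: "E \<in> sets \<eta>"
    have "emeasure \<eta> E = emeasure (\<eta> \<bind> KA K A) E" using eta_bind by simp
    also have "\<dots> = (\<integral>\<^sup>+ q. emeasure (KA K A q) E \<partial>\<eta>)"
      using emeasure_bind[OF ne_eta KA_meas, of E] E sets_eta by simp
    finally show "emeasure \<eta> E = (\<integral>\<^sup>+ q. emeasure (KA K A q) E \<partial>\<eta>)" .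
  qed
  have S_sets: "S \<in> sets borel" using S_closed by (simp add: borel_closed)
  have S'_sets: "S' \<in> sets borel" using S'_closed by (simp add: borel_closed)
  have ident: "(LINT z : S | m. \<psi> z) = (LINT q : S' | \<eta>. (\<integral>w1. \<psi> (w1, fst q, snd q) \<partial>K (fst q)))"
    if cont\<psi>: "continuous_on S \<psi>" for \<psi> :: "'a \<times> 'a \<times> (real^'m^'m) \<Rightarrow> real"
  proof -
    have "bounded (\<psi> ` S)" by (intro compact_imp_bounded compact_continuous_image cont\<psi> S_compact)
    then obtain c0 where c0: "\<And>z. z \<in> S \<Longrightarrow> norm (\<psi> z) \<le> c0" by (auto simp: bounded_iff)
    define h where "h = (\<lambda>z. indicator S z *\<^sub>R \<psi> z)"
    have h_meas: "h \<in> borel_measurable borel"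
      unfolding h_def by (rule borel_measurable_continuous_on_indicator[OF S_sets cont\<psi>])
    have h_bnd: "\<bar>h z\<bar> \<le> max c0 0" for z
      using c0[of z] by (auto simp: h_def indicator_def)
    have sub_eta: "subprob_space \<eta>" using prob_eta by (simp add: prob_space_imp_subprob_space)
    have "(LINT z : S | m. \<psi> z) = (\<integral>z. h z \<partial>m)" by (simp add: set_lebesgue_integral_def h_def)
    also have "\<dots> = (\<integral>z. h z \<partial>(\<eta> \<bind> G))" using m_eta by simp
    also have "\<dots> = (\<integral>q. (\<integral>z. h z \<partial>G q) \<partial>\<eta>)"
      by (rule integral_bind_bounded[OF G_meas_eta h_meas h_bnd sub_eta])
    also have "\<dots> = (LINT q : S' | \<eta>. (\<integral>w1. \<psi> (w1, fst q, snd q) \<partial>K (fst q)))"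
      unfolding set_lebesgue_integral_def
    proof (rule Bochner_Integration.integral_cong[OF refl])
      fix q :: "'a \<times> (real^'m^'m)"
      have "(\<integral>z. h z \<partial>G q) = (\<integral>w. h (w, q) \<partial>K (fst q))"
        unfolding G_def by (rule integral_distr[OF emb_meas h_meas])
      also have "\<dots> = (\<integral>w. indicator S' q *\<^sub>R \<psi> (w, q) \<partial>K (fst q))"
        by (simp add: h_def S_S' indicator_def)
      also have "\<dots> = indicator S' q *\<^sub>R (\<integral>w. \<psi> (w, q) \<partial>K (fst q))"
        by (rule integral_scaleR_right)
      finally show "(\<integral>z. h z \<partial>G q) = indicator S' q *\<^sub>R (\<integral>w1. \<psi> (w1, fst q, snd q) \<partial>K (fst q))"
        by simp
    qed
    finally show ?thesis .
  qed

  have full: "(LINT q : S' | \<mu>. f q) = (\<integral>q. f q \<partial>\<mu>)"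
    if "prob_space \<mu>" "sets \<mu> = sets borel" "emeasure \<mu> S' = 1" "f \<in> borel_measurable borel"
    for \<mu> :: "('a \<times> (real^'m^'m)) measure" and f :: "'a \<times> (real^'m^'m) \<Rightarrow> real"
  proof -
    interpret prob_space \<mu> by fact
    have "prob S' = 1" using that(3) by (simp add: emeasure_eq_measure)
    then have ae: "AE q in \<mu>. q \<in> S'" by (rule AE_prob_1)
    have fm: "f \<in> borel_measurable \<mu>" using that(4) measurable_cong_sets[OF that(2) refl, of "borel :: real measure"] by simp
    have im: "(\<lambda>q. indicator S' q *\<^sub>R f q) \<in> borel_measurable \<mu>"
      using fm S'_sets that(2) by (intro borel_measurable_scaleR borel_measurable_indicator) auto
    show ?thesis unfolding set_lebesgue_integral_def
      by (rule integral_cong_AE[OF im fm]) (use ae in \<open>auto simp: indicator_def\<close>)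
  qed

  have uniq: "\<eta>' = \<eta>"
    if H1: "\<eta>' \<in> space (prob_algebra borel)" and H2: "emeasure \<eta>' (UNIV \<times> PRm) = 1"
      and H3: "\<forall>\<psi> :: 'a \<times> 'a \<times> (real^'m^'m) \<Rightarrow> real.
                 continuous_on (UNIV \<times> UNIV \<times> PRm) \<psi> \<longrightarrow>
                 (LINT z : UNIV \<times> UNIV \<times> PRm | m. \<psi> z) =
                 (LINT q : UNIV \<times> PRm | \<eta>'. (\<integral>w1. \<psi> (w1, fst q, snd q) \<partial>K (fst q)))"
    for \<eta>'
  proof -
    have sets_eta': "sets \<eta>' = sets borel" and prob_eta': "prob_space \<eta>'"
      using H1 by (auto simp: space_prob_algebra)
    have eta'_S': "emeasure \<eta>' S' = 1" using H2 by (simp add: S'_def)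
    have contint: "(\<integral>q. f q \<partial>\<eta>') = (\<integral>q. f q \<partial>\<eta>)" if fc: "continuous_on UNIV f"
      for f :: "'a \<times> (real^'m^'m) \<Rightarrow> real"
    proof -
      define \<psi> where "\<psi> = (\<lambda>z::'a \<times> 'a \<times> (real^'m^'m). f (snd z))"
      have c\<psi>: "continuous_on S \<psi>" unfolding \<psi>_def
        by (rule continuous_on_compose2[OF fc]) (auto intro: continuous_intros)
      have inner: "(\<integral>w1. \<psi> (w1, fst q, snd q) \<partial>K (fst q)) = f q" for q
      proof -
        interpret prob_space "K (fst q)" by (rule Kprob(1))
        show ?thesis by (simp add: \<psi>_def prob_space)
      qed
      have inner2: "(\<integral>w1. \<psi> (w1, q) \<partial>K (fst q)) = f q" for q
        using inner[of q] by simp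
      have "(LINT q : S' | \<eta>'. f q) = (LINT q : S' | \<eta>. f q)"
        using H3[rule_format, of \<psi>] c\<psi> ident[OF c\<psi>] by (simp add: inner inner2 S_def S'_def)
      moreover have fb: "f \<in> borel_measurable borel" by (rule borel_measurable_continuous_onI[OF fc])
      ultimately show ?thesis
        using full[OF prob_eta' sets_eta' eta'_S' fb] full[OF prob_eta sets_eta eta_S' fb] by simp
    qed
    have closed_eq: "emeasure \<eta>' C = emeasure \<eta> C" if C: "closed C" for C
    proof (cases "C = {}")
      case True then show ?thesis by simp
    next
      case False
      have fc: "continuous_on UNIV (\<lambda>x::'a \<times> (real^'m^'m). max 0 (1 - real (Suc n) * infdist x C))" for n
        by (intro continuous_intros)
      have l1: "(\<lambda>n. \<integral>x. max 0 (1 - real (Suc n) * infdist x C) \<partial>\<eta>') \<longlonglongrightarrow> measure \<eta>' C"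
        by (rule closed_approx_integral[OF prob_eta' sets_eta' C False])
      have l2: "(\<lambda>n. \<integral>x. max 0 (1 - real (Suc n) * infdist x C) \<partial>\<eta>) \<longlonglongrightarrow> measure \<eta> C"
        by (rule closed_approx_integral[OF prob_eta sets_eta C False])
      have "measure \<eta>' C = measure \<eta> C"
        using LIMSEQ_unique[OF l1] l2 contint[OF fc] by simp
      then show ?thesis
        using emeasure_eq_ennreal_measure[of \<eta>' C] emeasure_eq_ennreal_measure[of \<eta> C]
          neq_top_trans[OF ennreal_one_neq_top prob_space.emeasure_le_1[OF prob_eta', of C]]
          neq_top_trans[OF ennreal_one_neq_top prob_space.emeasure_le_1[OF prob_eta, of C]]
        by simp
    qed
    have gen: "sets (borel :: ('a \<times> (real^'m^'m)) measure) = sigma_sets UNIV (Collect closed)"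
      by (subst borel_eq_closed) (simp add: sets_measure_of)
    show ?thesis
    proof (rule measure_eqI_generator_eq[where E="Collect closed" and \<Omega>=UNIV and A="\<lambda>_. UNIV"])
      show "Int_stable (Collect closed :: ('a \<times> (real^'m^'m)) set set)"
        by (auto simp: Int_stable_def)
      show "sets \<eta>' = sigma_sets UNIV (Collect closed)" using sets_eta' gen by simp
      show "sets \<eta> = sigma_sets UNIV (Collect closed)" using sets_eta gen by simp
      show "emeasure \<eta>' UNIV \<noteq> \<infinity>" for i :: nat
        using prob_space.emeasure_le_1[OF prob_eta', of UNIV] by (auto simp: top_unique)
    qed (use closed_eq in auto)
  qed

  have identS: "\<forall>\<psi> :: 'a \<times> 'a \<times> (real^'m^'m) \<Rightarrow> real.
                 continuous_on (UNIV \<times> UNIV \<times> PRm) \<psi> \<longrightarrow>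
                 (LINT z : UNIV \<times> UNIV \<times> PRm | m. \<psi> z) =
                 (LINT q : UNIV \<times> PRm | \<eta>. (\<integral>w1. \<psi> (w1, fst q, snd q) \<partial>K (fst q)))"
    using ident unfolding S_def S'_def by blast
  have eta_S'': "emeasure \<eta> (UNIV \<times> PRm) = 1" using eta_S' by (simp add: S'_def)
  show ?thesis
    by (rule exI[of _ \<eta>], intro conjI eta_prob eta_S'' identS stat allI impI, rule uniq) blast+
qed

end
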